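(* Let $r \colon B \to \mathbb{I}$ and let $m \colon A \rightarrowtail B$ be a monomorphism in $\widehat{\square}_\vee$. Then the map $r \hat{\times}_B m \colon M_r(m) \to \mathbb{I} \times B$ is a trivial cofibration, i.e. it has the left lifting property with respect to every fibration (every map with the right lifting property against all maps $\delta_k \hat{\times} m'$, $k\in\{0,1\}$, $m'$ a monomorphism).
   Context: Semilattices: sets with an associative, commutative, idempotent binary operation $\vee$; homomorphisms preserve $\vee$ (no bounds required). Let $\square_\vee$ (the semilattice cube category, equivalently the Lawvere theory of semilattices with constants $0,1$ satisfying $0\vee x=x$, $1\vee x=1$) be the category whose objects are the semilattices $[1]^n$ ($n\in\mathbb{N}$, $[1]=\{0<1\}$ with $\vee=\max$, pointwise structure) and whose morphisms are all semilattice homomorphisms between them. Fix a strongly inaccessible cardinal $\kappa$ and let $\widehat{\square}_\vee$ be the category of presheaves on $\square_\vee$ valued in $\kappa$-small sets. Let $\mathbb{I}$ be the representable presheaf on $[1]$, $\delta_k \colon 1 \to \mathbb{I}$ ($k\in\{0,1\}$) the endpoint inclusions, and $\varepsilon\colon \mathbb I\to 1$ the unique map. For maps $f\colon X\to Y$, $g\colon X'\to Y'$, the pushout product $f\hat\times g$ is the induced map $(X\times Y')\sqcup_{X\times X'}(Y\times X')\to Y\times Y'$. For $r\colon B\to\mathbb I$ and $f\colon A\to B$, the unbiased mapping cylinder $M_r(f)$ is the pushout of $f \colon A \to B$ and $\langle rf, \mathrm{id}_A\rangle \colon A \to \mathbb{I}\times A$, with induced maps $c_r\colon B\to M_r(f)$,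 $d_r\colon \mathbb I\times A\to M_r(f)$. For a mono $m\colon A\to B$, $r\hat\times_B m\colon M_r(m)\to \mathbb I\times B$ is the unique map restricting to $\langle r,\mathrm{id}_B\rangle$ on $B$ and to $\mathbb I\times m$ on $\mathbb I\times A$. *)

theory Defs
  imports Main "HOL-Library.FuncSet"
begin

text \<open>The object [1]^n is represented by the set of boolean lists of length n,
  with pointwise disjunction as join (0 = False < 1 = True, join = max).\<close>

definition cube :: "nat \<Rightarrow> bool list set" where
  "cube n = {xs. length xs = n}"

definition join :: "bool list \<Rightarrow> bool list \<Rightarrow> bool list" where
  "join xs ys = map2 (\<or>) xs ys"

definition shom :: "nat \<Rightarrow> nat \<Rightarrow> (bool list \<Rightarrow> bool list) set" where
  "shom m n = {f. f \<in> extensional (cube m) \<and> f \<in> cube m \<rightarrow> cube n \<and>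
      (\<forall>x\<in>cube m. \<forall>y\<in>cube m. f (join x y) = join (f x) (f y))}"

definition cid :: "nat \<Rightarrow> bool list \<Rightarrow> bool list" where
  "cid n = restrict id (cube n)"

text \<open>A presheaf: sets F([1]^n) and restriction maps F(f) : F([1]^n) \<rightarrow> F([1]^m)
  for f : [1]^m \<rightarrow> [1]^n (written act F m n f).\<close>

record 'a psh =
  obj :: "nat \<Rightarrow> 'a set"
  act :: "nat \<Rightarrow> nat \<Rightarrow> (bool list \<Rightarrow> bool list) \<Rightarrow> 'a \<Rightarrow> 'a"

definition is_psh :: "'a psh \<Rightarrow> bool" where
  "is_psh F \<longleftrightarrow>
     (\<forall>m n f x. f \<in> shom m n \<longrightarrow> x \<in> obj F n \<longrightarrow> act F m n f x \<in> obj F m) \<and>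
     (\<forall>n x. x \<in> obj F n \<longrightarrow> act F n n (cid n) x = x) \<and>
     (\<forall>l m n f g x. f \<in> shom l m \<longrightarrow> g \<in> shom m n \<longrightarrow> x \<in> obj F n \<longrightarrow>
         act F l n (compose (cube l) g f) x = act F l m f (act F m n g x))"

definition is_map :: "'a psh \<Rightarrow> 'b psh \<Rightarrow> (nat \<Rightarrow> 'a \<Rightarrow> 'b) \<Rightarrow> bool" where
  "is_map F G \<alpha> \<longleftrightarrow>
     (\<forall>n x. x \<in> obj F n \<longrightarrow> \<alpha> n x \<in> obj G n) \<and>
     (\<forall>m n f x. f \<in> shom m n \<longrightarrow> x \<in> obj F n \<longrightarrow>
         \<alpha> m (act F m n f x) = act G m n f (\<alpha> n x))"

definition is_mono :: "'a psh \<Rightarrow> 'b psh \<Rightarrow> (nat \<Rightarrow> 'a \<Rightarrow> 'b) \<Rightarrow> bool" where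
  "is_mono F G \<alpha> \<longleftrightarrow> is_map F G \<alpha> \<and> (\<forall>n. inj_on (\<alpha> n) (obj F n))"

definition llp :: "'a psh \<Rightarrow> 'b psh \<Rightarrow> (nat \<Rightarrow> 'a \<Rightarrow> 'b) \<Rightarrow>
                   'x psh \<Rightarrow> 'y psh \<Rightarrow> (nat \<Rightarrow> 'x \<Rightarrow> 'y) \<Rightarrow> bool" where
  "llp A B f X Y p \<longleftrightarrow>
     (\<forall>u v. is_map A X u \<longrightarrow> is_map B Y v \<longrightarrow>
        (\<forall>n a. a \<in> obj A n \<longrightarrow> p n (u n a) = v n (f n a)) \<longrightarrow>
        (\<exists>d. is_map B X d \<and>
             (\<forall>n a. a \<in> obj A n \<longrightarrow> d n (f n a) = u n a) \<and>
             (\<forall>n b. b \<in> obj B n \<longrightarrow> p n (d n b) = v n b)))"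

text \<open>The interval: the representable presheaf on [1].\<close>

definition Ipsh :: "(bool list \<Rightarrow> bool list) psh" where
  "Ipsh = \<lparr>obj = (\<lambda>n. shom n 1), act = (\<lambda>m n f g. compose (cube m) g f)\<rparr>"

definition term_psh :: "unit psh" where
  "term_psh = \<lparr>obj = (\<lambda>n. {()}), act = (\<lambda>m n f x. x)\<rparr>"

text \<open>Endpoint inclusions delta_k : 1 \<rightarrow> I (k = False for 0, k = True for 1).\<close>

definition delta :: "bool \<Rightarrow> nat \<Rightarrow> unit \<Rightarrow> (bool list \<Rightarrow> bool list)" where
  "delta k n u = restrict (\<lambda>_. [k]) (cube n)"

definition prod_psh :: "'a psh \<Rightarrow> 'b psh \<Rightarrow> ('a \<times> 'b) psh" where
  "prod_psh F G = \<lparr>obj = (\<lambda>n. obj F n \<times> obj G n),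
      act = (\<lambda>m n f xy. (act F m n f (fst xy), act G m n f (snd xy)))\<rparr>"

text \<open>Pushout of f : C \<rightarrow> A and g : C \<rightarrow> B, computed levelwise as a quotient
  of the disjoint union by the equivalence relation generated by f c ~ g c.\<close>

definition po_rel :: "'c psh \<Rightarrow> 'a psh \<Rightarrow> 'b psh \<Rightarrow> (nat \<Rightarrow> 'c \<Rightarrow> 'a) \<Rightarrow> (nat \<Rightarrow> 'c \<Rightarrow> 'b)
                      \<Rightarrow> nat \<Rightarrow> (('a + 'b) \<times> ('a + 'b)) set" where
  "po_rel C A B f g n =
     (let R = {(Inl (f n c), Inr (g n c)) | c. c \<in> obj C n}
      in (R \<union> R\<inverse> \<union> Id_on (obj A n <+> obj B n))\<^sup>*)"

definition pushout :: "'c psh \<Rightarrow> 'a psh \<Rightarrow> 'b psh \<Rightarrow> (nat \<Rightarrow> 'c \<Rightarrow> 'a) \<Rightarrow> (nat \<Rightarrow> 'c \<Rightarrow> 'b)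
                       \<Rightarrow> ('a + 'b) set psh" where
  "pushout C A B f g =
     \<lparr>obj = (\<lambda>n. (obj A n <+> obj B n) // po_rel C A B f g n),
      act = (\<lambda>m n h S. po_rel C A B f g m `` (map_sum (act A m n h) (act B m n h) ` S))\<rparr>"

definition po_copair :: "(nat \<Rightarrow> 'a \<Rightarrow> 'z) \<Rightarrow> (nat \<Rightarrow> 'b \<Rightarrow> 'z) \<Rightarrow> nat \<Rightarrow> ('a + 'b) set \<Rightarrow> 'z" where
  "po_copair h1 h2 n S = the_elem (case_sum (h1 n) (h2 n) ` S)"

text \<open>Pushout product of f : X \<rightarrow> Y and g : X' \<rightarrow> Y':
  (X \<times> Y') \<squnion>_{X \<times> X'} (Y \<times> X') \<rightarrow> Y \<times> Y'.\<close>

definition pp_dom :: "'x psh \<Rightarrow> 'y psh \<Rightarrow> (nat \<Rightarrow> 'x \<Rightarrow> 'y) \<Rightarrow>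
                      'x2 psh \<Rightarrow> 'y2 psh \<Rightarrow> (nat \<Rightarrow> 'x2 \<Rightarrow> 'y2) \<Rightarrow>
                      (('x \<times> 'y2) + ('y \<times> 'x2)) set psh" where
  "pp_dom X Y f X' Y' g =
     pushout (prod_psh X X') (prod_psh X Y') (prod_psh Y X')
       (\<lambda>n xx. (fst xx, g n (snd xx))) (\<lambda>n xx. (f n (fst xx), snd xx))"

definition pp_map :: "(nat \<Rightarrow> 'x \<Rightarrow> 'y) \<Rightarrow> (nat \<Rightarrow> 'x2 \<Rightarrow> 'y2) \<Rightarrow>
                      nat \<Rightarrow> (('x \<times> 'y2) + ('y \<times> 'x2)) set \<Rightarrow> 'y \<times> 'y2" where
  "pp_map f g = po_copair (\<lambda>n xy. (f n (fst xy), snd xy)) (\<lambda>n yx. (fst yx, g n (snd yx)))"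

text \<open>Unbiased mapping cylinder M_r(m): pushout of m : A \<rightarrow> B and
  \<langle>r m, id\<rangle> : A \<rightarrow> I \<times> A; and the map r \<times>_B m : M_r(m) \<rightarrow> I \<times> B.\<close>

definition mcyl :: "'a psh \<Rightarrow> 'b psh \<Rightarrow> (nat \<Rightarrow> 'b \<Rightarrow> (bool list \<Rightarrow> bool list)) \<Rightarrow>
                    (nat \<Rightarrow> 'a \<Rightarrow> 'b) \<Rightarrow> ('b + ((bool list \<Rightarrow> bool list) \<times> 'a)) set psh" where
  "mcyl A B r m = pushout A B (prod_psh Ipsh A) m (\<lambda>n a. (r n (m n a), a))"

definition mcyl_map :: "(nat \<Rightarrow> 'b \<Rightarrow> (bool list \<Rightarrow> bool list)) \<Rightarrow> (nat \<Rightarrow> 'a \<Rightarrow> 'b) \<Rightarrow>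
                        nat \<Rightarrow> ('b + ((bool list \<Rightarrow> bool list) \<times> 'a)) set \<Rightarrow>
                        (bool list \<Rightarrow> bool list) \<times> 'b" where
  "mcyl_map r m = po_copair (\<lambda>n b. (r n b, b)) (\<lambda>n ia. (fst ia, m n (snd ia)))"

text \<open>The presheaves A', B' range over
  presheaves valued in subsets of a universe type 'u.\<close>

definition is_fibration :: "'u itself \<Rightarrow> 'x psh \<Rightarrow> 'y psh \<Rightarrow> (nat \<Rightarrow> 'x \<Rightarrow> 'y) \<Rightarrow> bool" where
  "is_fibration (U :: 'u itself) X Y p \<longleftrightarrow> is_map X Y p \<and>
     (\<forall>k (A' :: 'u psh) (B' :: 'u psh) m'. is_psh A' \<longrightarrow> is_psh B' \<longrightarrow> is_mono A' B' m' \<longrightarrow>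
        llp (pp_dom term_psh Ipsh (delta k) A' B' m') (prod_psh Ipsh B')
            (pp_map (delta k) m') X Y p)"

end

theory Submission
  imports Defs "HOL-Library.Countable_Set"
begin


lemma obj_Ipsh[simp]: "obj Ipsh n = shom n 1" by (simp add: Ipsh_def)
lemma act_Ipsh[simp]: "act Ipsh m n f g = compose (cube m) g f" by (simp add: Ipsh_def)
lemma obj_prod[simp]: "obj (prod_psh F G) n = obj F n \<times> obj G n" by (simp add: prod_psh_def)
lemma act_prod[simp]: "act (prod_psh F G) m n f xy = (act F m n f (fst xy), act G m n f (snd xy))"
  by (simp add: prod_psh_def)
lemma obj_term[simp]: "obj term_psh n = {()}" by (simp add: term_psh_def)
lemma act_term[simp]: "act term_psh m n f x = x" by (simp add: term_psh_def)

lemma cube_iff[simp]: "x \<in> cube n \<longleftrightarrow> length x = n" by (simp add: cube_def)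

lemma join_cube: "x \<in> cube n \<Longrightarrow> y \<in> cube n \<Longrightarrow> join x y \<in> cube n"
  by (simp add: join_def)

lemma cube1: "x \<in> cube 1 \<Longrightarrow> \<exists>a. x = [a]"
  by (cases x) auto

lemma join1[simp]: "join [a] [b] = [a \<or> b]" by (simp add: join_def)

lemma shomD:
  assumes "f \<in> shom m n"
  shows "f \<in> extensional (cube m)" "\<And>x. x \<in> cube m \<Longrightarrow> f x \<in> cube n"
    "\<And>x y. x \<in> cube m \<Longrightarrow> y \<in> cube m \<Longrightarrow> f (join x y) = join (f x) (f y)"
  using assms by (auto simp: shom_def simp del: cube_iff)

lemma shom_compose:
  assumes "f \<in> shom l m" "g \<in> shom m n"
  shows "compose (cube l) g f \<in> shom l n"
  using shomD[OF assms(1)] shomD[OF assms(2)]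
  unfolding shom_def by (auto simp: compose_def join_cube simp del: cube_iff)

lemma cid_shom: "cid n \<in> shom n n"
  by (auto simp: cid_def shom_def join_cube simp del: cube_iff)

lemma compose_cid: "g \<in> extensional (cube n) \<Longrightarrow> compose (cube n) g (cid n) = g"
  by (rule extensionalityI[where A="cube n"]) (auto simp: compose_def cid_def simp del: cube_iff)

lemma compose_assoc_cube:
  assumes "f \<in> shom l m" "g \<in> shom m n"
  shows "compose (cube l) x (compose (cube l) g f) = compose (cube l) (compose (cube m) x g) f"
  using shomD[OF assms(1)] by (auto simp: compose_def simp del: cube_iff)

lemma is_psh_Ipsh: "is_psh Ipsh"
  unfolding is_psh_def
  by (auto simp: shom_compose compose_cid shomD(1) compose_assoc_cube)

lemma is_psh_term: "is_psh term_psh"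
  unfolding is_psh_def by auto

lemma is_psh_prod: "is_psh F \<Longrightarrow> is_psh G \<Longrightarrow> is_psh (prod_psh F G)"
  unfolding is_psh_def by auto

lemma delta_shom[simp]: "delta k n u \<in> shom n 1"
  by (auto simp: delta_def shom_def join_def)

lemma delta_shom'[simp]: "delta k n u \<in> shom n (Suc 0)"
  using delta_shom by simp

lemma delta_compose[simp]: "f \<in> shom m n \<Longrightarrow> compose (cube m) (delta k n u) f = delta k m u"
  using shomD(2)[of f m n]
  by (auto simp: delta_def compose_def simp del: cube_iff)

definition ijoin :: "nat \<Rightarrow> (bool list \<Rightarrow> bool list) \<Rightarrow> (bool list \<Rightarrow> bool list) \<Rightarrow> (bool list \<Rightarrow> bool list)" where
  "ijoin n f g = restrict (\<lambda>x. join (f x) (g x)) (cube n)"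

lemma ijoin_shom[simp]:
  assumes "f \<in> shom n 1" "g \<in> shom n 1" shows "ijoin n f g \<in> shom n 1"
proof -
  have "join (join (f x) (g x)) (join (f y) (g y)) = join (join (f x) (f y)) (join (g x) (g y))"
    if "x \<in> cube n" "y \<in> cube n" for x y
    using cube1[OF shomD(2)[OF assms(1) that(1)]] cube1[OF shomD(2)[OF assms(1) that(2)]]
      cube1[OF shomD(2)[OF assms(2) that(1)]] cube1[OF shomD(2)[OF assms(2) that(2)]]
    by auto
  then show ?thesis
    using shomD[OF assms(1)] shomD[OF assms(2)]
    unfolding shom_def ijoin_def by (auto simp: join_cube simp del: cube_iff)
qed

lemma ijoin_compose:
  assumes "h \<in> shom l n"
  shows "compose (cube l) (ijoin n f g) h = ijoin l (compose (cube l) f h) (compose (cube l) g h)"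
  using shomD(2)[OF assms] by (auto simp: ijoin_def compose_def simp del: cube_iff)

lemma ijoin_delta0[simp]: "f \<in> shom n 1 \<Longrightarrow> ijoin n f (delta False n u) = f"
proof (rule extensionalityI[where A="cube n"])
  assume f: "f \<in> shom n 1"
  show "ijoin n f (delta False n u) \<in> extensional (cube n)" by (simp add: ijoin_def)
  show "f \<in> extensional (cube n)" using shomD(1)[OF f] .
  fix x assume x: "x \<in> cube n"
  obtain a where "f x = [a]" using cube1[OF shomD(2)[OF f x]] by blast
  then show "ijoin n f (delta False n u) x = f x" using x by (simp add: ijoin_def delta_def)
qed

lemma ijoin_delta1[simp]: "f \<in> shom n 1 \<Longrightarrow> ijoin n f (delta True n u) = delta True n u'"
proof (rule extensionalityI[where A="cube n"])
  assume f: "f \<in> shom n 1"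
  show "ijoin n f (delta True n u) \<in> extensional (cube n)" by (simp add: ijoin_def)
  show "delta True n u' \<in> extensional (cube n)" by (simp add: delta_def)
  fix x assume x: "x \<in> cube n"
  obtain a where "f x = [a]" using cube1[OF shomD(2)[OF f x]] by blast
  then show "ijoin n f (delta True n u) x = delta True n u' x" using x by (simp add: ijoin_def delta_def)
qed



lemma is_pshD1: "is_psh F \<Longrightarrow> f \<in> shom m n \<Longrightarrow> x \<in> obj F n \<Longrightarrow> act F m n f x \<in> obj F m"
  unfolding is_psh_def by blast
lemma is_mapD1: "is_map F G a \<Longrightarrow> x \<in> obj F n \<Longrightarrow> a n x \<in> obj G n"
  unfolding is_map_def by blast
lemma is_mapD2: "is_map F G a \<Longrightarrow> f \<in> shom m n \<Longrightarrow> x \<in> obj F n \<Longrightarrow> a m (act F m n f x) = act G m n f (a n x)"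
  unfolding is_map_def by blast

lemma po_rel_nat:
  assumes "is_psh C" "is_map C A f" "is_map C B g" "h \<in> shom m n"
    and "(x, y) \<in> po_rel C A B f g n"
  shows "(map_sum (act A m n h) (act B m n h) x, map_sum (act A m n h) (act B m n h) y) \<in> po_rel C A B f g m"
  using assms(5) unfolding po_rel_def Let_def
proof (induction rule: rtrancl_induct)
  case base then show ?case by simp
next
  case (step y z)
  let ?F = "map_sum (act A m n h) (act B m n h)"
  let ?R = "{(Inl (f m c), Inr (g m c)) | c. c \<in> obj C m}"
  have "(?F y, ?F z) \<in> (?R \<union> ?R\<inverse> \<union> Id_on (obj A m <+> obj B m))\<^sup>*"
  proof -
    from step.hyps(2) consider (a) c where "c \<in> obj C n" "y = Inl (f n c)" "z = Inr (g n c)"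
      | (b) c where "c \<in> obj C n" "z = Inl (f n c)" "y = Inr (g n c)" | (c) "y = z" by auto
    then show ?thesis
    proof cases
      case a
      have c': "act C m n h c \<in> obj C m" using is_pshD1[OF assms(1) assms(4) a(1)] .
      have "(?F y, ?F z) = (Inl (f m (act C m n h c)), Inr (g m (act C m n h c)))"
        using a is_mapD2[OF assms(2) assms(4) a(1)] is_mapD2[OF assms(3) assms(4) a(1)] by simp
      then have "(?F y, ?F z) \<in> ?R" using c' by blast
      then show ?thesis by blast
    next
      case b
      have c': "act C m n h c \<in> obj C m" using is_pshD1[OF assms(1) assms(4) b(1)] .
      have "(?F z, ?F y) = (Inl (f m (act C m n h c)), Inr (g m (act C m n h c)))"
        using b is_mapD2[OF assms(2) assms(4) b(1)] is_mapD2[OF assms(3) assms(4) b(1)] by simp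
      then have "(?F z, ?F y) \<in> ?R" using c' by blast
      then show ?thesis by blast
    qed simp
  qed
  then show ?case using step.IH by (rule rtrancl_trans[rotated])
qed

lemma po_rel_inv:
  assumes "\<And>c. c \<in> obj C n \<Longrightarrow> hl n (f n c) = hr n (g n c)"
    and "(x, y) \<in> po_rel C A B f g n"
  shows "case_sum (hl n) (hr n) x = case_sum (hl n) (hr n) y"
  using assms(2) unfolding po_rel_def Let_def
proof (induction rule: rtrancl_induct)
  case (step y z)
  then show ?case using assms(1) by auto
qed simp

lemma po_rel_sym: "sym (po_rel C A B f g n)"
  unfolding po_rel_def Let_def
  by (rule sym_rtrancl) (auto simp: sym_def)

lemma po_rel_trans: "trans (po_rel C A B f g n)"
  unfolding po_rel_def Let_def by (rule trans_rtrancl)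

lemma po_rel_refl: "(x, x) \<in> po_rel C A B f g n"
  unfolding po_rel_def Let_def by simp

lemma po_rel_gen: "c \<in> obj C n \<Longrightarrow> (Inl (f n c), Inr (g n c)) \<in> po_rel C A B f g n"
  unfolding po_rel_def Let_def by (rule r_into_rtrancl) blast

lemma po_cls_eq:
  assumes "(x, y) \<in> po_rel C A B f g n"
  shows "po_rel C A B f g n `` {x} = po_rel C A B f g n `` {y}"
  using assms po_rel_sym[of C A B f g n] po_rel_trans[of C A B f g n]
  unfolding sym_def trans_def by blast

lemma po_cls_obj: "x \<in> obj A n <+> obj B n \<Longrightarrow> po_rel C A B f g n `` {x} \<in> obj (pushout C A B f g) n"
  unfolding pushout_def by (simp add: quotientI)

lemma po_obj_cases:
  assumes "S \<in> obj (pushout C A B f g) n"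
  obtains x where "x \<in> obj A n <+> obj B n" "S = po_rel C A B f g n `` {x}"
  using assms unfolding pushout_def by (auto elim!: quotientE)

lemma po_act_cls:
  assumes "is_psh C" "is_map C A f" "is_map C B g" "h \<in> shom m n"
  shows "act (pushout C A B f g) m n h (po_rel C A B f g n `` {x})
       = po_rel C A B f g m `` {map_sum (act A m n h) (act B m n h) x}"
proof -
  let ?F = "map_sum (act A m n h) (act B m n h)"
  let ?r = "po_rel C A B f g"
  have 1: "?r m `` (?F ` (?r n `` {x})) \<subseteq> ?r m `` {?F x}"
  proof
    fix z assume "z \<in> ?r m `` (?F ` (?r n `` {x}))"
    then obtain y where y: "(x, y) \<in> ?r n" "(?F y, z) \<in> ?r m" by auto
    have "(?F x, ?F y) \<in> ?r m" using po_rel_nat[OF assms y(1)] .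
    then show "z \<in> ?r m `` {?F x}" using y(2) po_rel_trans[of C A B f g m] unfolding trans_def by blast
  qed
  have 2: "?r m `` {?F x} \<subseteq> ?r m `` (?F ` (?r n `` {x}))"
    using po_rel_refl[of x C A B f g n] by blast
  show ?thesis using 1 2 unfolding pushout_def by simp
qed

lemma po_copair_cls:
  assumes "\<And>c. c \<in> obj C n \<Longrightarrow> hl n (f n c) = hr n (g n c)"
  shows "po_copair hl hr n (po_rel C A B f g n `` {x}) = case_sum (hl n) (hr n) x"
proof -
  let ?H = "case_sum (hl n) (hr n)"
  have 1: "?H y = ?H x" if "y \<in> po_rel C A B f g n `` {x}" for y
    using po_rel_inv[where C=C and n=n and hl=hl and hr=hr and f=f and g=g and x=x and y=y, OF assms] that by simp
  have 2: "x \<in> po_rel C A B f g n `` {x}" using po_rel_refl[of x C A B f g n] by simp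
  have "?H ` (po_rel C A B f g n `` {x}) = {?H x}"
  proof
    show "?H ` (po_rel C A B f g n `` {x}) \<subseteq> {?H x}" using 1 by blast
    show "{?H x} \<subseteq> ?H ` (po_rel C A B f g n `` {x})" using 2 by blast
  qed
  then show ?thesis unfolding po_copair_def by simp
qed

lemma is_map_copair:
  assumes "is_psh C" "is_map C A f" "is_map C B g" "is_map A Z hl" "is_map B Z hr"
    and "\<And>n c. c \<in> obj C n \<Longrightarrow> hl n (f n c) = hr n (g n c)"
  shows "is_map (pushout C A B f g) Z (po_copair hl hr)"
  unfolding is_map_def
proof (intro conjI allI impI)
  fix n S assume "S \<in> obj (pushout C A B f g) n"
  then obtain x where x: "x \<in> obj A n <+> obj B n" "S = po_rel C A B f g n `` {x}" by (rule po_obj_cases)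
  have e3: "po_copair hl hr n S = case_sum (hl n) (hr n) x"
    unfolding x(2) by (rule po_copair_cls) (rule assms(6))
  show "po_copair hl hr n S \<in> obj Z n"
    unfolding e3 using x(1) is_mapD1[OF assms(4)] is_mapD1[OF assms(5)] by (cases x) auto
next
  fix m n h S assume h: "h \<in> shom m n" and S: "S \<in> obj (pushout C A B f g) n"
  from S obtain x where x: "x \<in> obj A n <+> obj B n" "S = po_rel C A B f g n `` {x}" by (rule po_obj_cases)
  have e1: "act (pushout C A B f g) m n h S = po_rel C A B f g m `` {map_sum (act A m n h) (act B m n h) x}"
    unfolding x(2) by (rule po_act_cls[OF assms(1-3) h])
  have e2: "po_copair hl hr m (po_rel C A B f g m `` {y}) = case_sum (hl m) (hr m) y" for y
    by (rule po_copair_cls) (rule assms(6))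
  have e3: "po_copair hl hr n S = case_sum (hl n) (hr n) x"
    unfolding x(2) by (rule po_copair_cls) (rule assms(6))
  show "po_copair hl hr m (act (pushout C A B f g) m n h S) = act Z m n h (po_copair hl hr n S)"
    unfolding e1 e2 e3 using x(1) is_mapD2[OF assms(4) h] is_mapD2[OF assms(5) h] by (cases x) auto
qed



definition subpsh :: "'a psh \<Rightarrow> (nat \<Rightarrow> 'a set) \<Rightarrow> 'a psh" where
  "subpsh B T = \<lparr>obj = T, act = act B\<rparr>"

lemma obj_subpsh[simp]: "obj (subpsh B T) n = T n" by (simp add: subpsh_def)
lemma act_subpsh[simp]: "act (subpsh B T) = act B" by (simp add: subpsh_def)

definition subclosed :: "'a psh \<Rightarrow> (nat \<Rightarrow> 'a set) \<Rightarrow> bool" where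
  "subclosed B T \<longleftrightarrow> (\<forall>n. T n \<subseteq> obj B n) \<and>
     (\<forall>m n f x. f \<in> shom m n \<longrightarrow> x \<in> T n \<longrightarrow> act B m n f x \<in> T m)"

definition lprob :: "bool \<Rightarrow> 'b psh \<Rightarrow> (nat \<Rightarrow> 'b set) \<Rightarrow> (nat \<Rightarrow> 'b \<Rightarrow> 'x)
   \<Rightarrow> (nat \<Rightarrow> (bool list \<Rightarrow> bool list) \<times> 'b \<Rightarrow> 'x) \<Rightarrow> (nat \<Rightarrow> (bool list \<Rightarrow> bool list) \<times> 'b \<Rightarrow> 'y)
   \<Rightarrow> 'x psh \<Rightarrow> 'y psh \<Rightarrow> (nat \<Rightarrow> 'x \<Rightarrow> 'y) \<Rightarrow> bool" where
  "lprob k B S \<alpha> \<beta> v X Y p \<longleftrightarrow> is_psh B \<and> subclosed B S \<and> is_map B X \<alpha> \<and>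
     is_map (prod_psh Ipsh (subpsh B S)) X \<beta> \<and>
     (\<forall>n s. s \<in> S n \<longrightarrow> \<beta> n (delta k n (), s) = \<alpha> n s) \<and>
     is_map (prod_psh Ipsh B) Y v \<and>
     (\<forall>n b. b \<in> obj B n \<longrightarrow> p n (\<alpha> n b) = v n (delta k n (), b)) \<and>
     (\<forall>n i s. i \<in> shom n 1 \<longrightarrow> s \<in> S n \<longrightarrow> p n (\<beta> n (i, s)) = v n (i, s))"

definition lsol :: "bool \<Rightarrow> 'b psh \<Rightarrow> (nat \<Rightarrow> 'b set) \<Rightarrow> (nat \<Rightarrow> 'b \<Rightarrow> 'x)
   \<Rightarrow> (nat \<Rightarrow> (bool list \<Rightarrow> bool list) \<times> 'b \<Rightarrow> 'x) \<Rightarrow> (nat \<Rightarrow> (bool list \<Rightarrow> bool list) \<times> 'b \<Rightarrow> 'y)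
   \<Rightarrow> 'x psh \<Rightarrow> 'y psh \<Rightarrow> (nat \<Rightarrow> 'x \<Rightarrow> 'y) \<Rightarrow> (nat \<Rightarrow> 'b set)
   \<Rightarrow> (nat \<Rightarrow> (bool list \<Rightarrow> bool list) \<times> 'b \<Rightarrow> 'x) \<Rightarrow> bool" where
  "lsol k B S \<alpha> \<beta> v X Y p T d \<longleftrightarrow>
     is_map (prod_psh Ipsh (subpsh B T)) X d \<and>
     (\<forall>n b. b \<in> T n \<longrightarrow> d n (delta k n (), b) = \<alpha> n b) \<and>
     (\<forall>n i s. i \<in> shom n 1 \<longrightarrow> s \<in> S n \<longrightarrow> d n (i, s) = \<beta> n (i, s)) \<and>
     (\<forall>n i b. i \<in> shom n 1 \<longrightarrow> b \<in> T n \<longrightarrow> p n (d n (i, b)) = v n (i, b))"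

lemma inj_into_infinite:
  assumes "infinite (UNIV :: 'u set)" "countable (Z :: 'd set)"
  shows "\<exists>e :: 'd \<Rightarrow> 'u. inj_on e Z"
proof -
  obtain f :: "nat \<Rightarrow> 'u" where "inj f" using infinite_countable_subset[OF assms(1)] by blast
  then have "inj_on (f \<circ> to_nat_on Z) Z"
    using inj_on_to_nat_on[OF assms(2)] by (simp add: comp_inj_on inj_on_subset)
  then show ?thesis by blast
qed

lemma lift_small:
  fixes B :: "'d psh" and X :: "'x psh" and Y :: "'y psh"
  assumes inf: "infinite (UNIV :: 'u set)"
    and fib: "is_fibration TYPE('u) X Y p"
    and pr: "lprob k B S \<alpha> \<beta> v X Y p"
    and cnt: "\<And>n. countable (obj B n)"
  shows "\<exists>d. lsol k B S \<alpha> \<beta> v X Y p (obj B) d"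
proof -
  have "\<forall>n. \<exists>e :: 'd \<Rightarrow> 'u. inj_on e (obj B n)" using inj_into_infinite[OF inf cnt] by blast
  then obtain e :: "nat \<Rightarrow> 'd \<Rightarrow> 'u" where inje: "\<And>n. inj_on (e n) (obj B n)" by metis
  define ie where "ie n = inv_into (obj B n) (e n)" for n
  have ie_e[simp]: "ie n (e n x) = x" if "x \<in> obj B n" for n x
    using inje that unfolding ie_def by simp
  from pr have psB: "is_psh B" and scS: "subclosed B S" and al: "is_map B X \<alpha>"
    and be: "is_map (prod_psh Ipsh (subpsh B S)) X \<beta>"
    and cmp: "\<And>n s. s \<in> S n \<Longrightarrow> \<beta> n (delta k n (), s) = \<alpha> n s"
    and vm: "is_map (prod_psh Ipsh B) Y v"
    and pa: "\<And>n b. b \<in> obj B n \<Longrightarrow> p n (\<alpha> n b) = v n (delta k n (), b)"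
    and pb: "\<And>n i s. i \<in> shom n 1 \<Longrightarrow> s \<in> S n \<Longrightarrow> p n (\<beta> n (i, s)) = v n (i, s)"
    unfolding lprob_def by blast+
  have SB: "\<And>n s. s \<in> S n \<Longrightarrow> s \<in> obj B n" using scS unfolding subclosed_def by blast
  have Scl: "\<And>m n f x. f \<in> shom m n \<Longrightarrow> x \<in> S n \<Longrightarrow> act B m n f x \<in> S m"
    using scS unfolding subclosed_def by blast
  have Bcl: "\<And>m n f x. f \<in> shom m n \<Longrightarrow> x \<in> obj B n \<Longrightarrow> act B m n f x \<in> obj B m"
    using psB unfolding is_psh_def by blast
  have Bid: "\<And>n x. x \<in> obj B n \<Longrightarrow> act B n n (cid n) x = x"
    using psB unfolding is_psh_def by blast
  have Bcomp: "\<And>l m n f g x. f \<in> shom l m \<Longrightarrow> g \<in> shom m n \<Longrightarrow> x \<in> obj B n \<Longrightarrow>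
         act B l n (compose (cube l) g f) x = act B l m f (act B m n g x)"
    using psB unfolding is_psh_def by blast
  define Bu :: "'u psh" where "Bu = \<lparr>obj = \<lambda>n. e n ` obj B n, act = \<lambda>m n f y. e m (act B m n f (ie n y))\<rparr>"
  define Au :: "'u psh" where "Au = \<lparr>obj = \<lambda>n. e n ` S n, act = act Bu\<rparr>"
  have oBu[simp]: "obj Bu n = e n ` obj B n" for n by (simp add: Bu_def)
  have aBu[simp]: "act Bu m n f y = e m (act B m n f (ie n y))" for m n f y by (simp add: Bu_def)
  have oAu[simp]: "obj Au n = e n ` S n" for n by (simp add: Au_def)
  have aAu[simp]: "act Au = act Bu" by (simp add: Au_def)
  have psBu: "is_psh Bu"
    unfolding is_psh_def using Bcl Bid Bcomp shom_compose by auto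
  have psAu: "is_psh Au"
    unfolding is_psh_def using Bcl Bid Bcomp shom_compose Scl SB by auto
  have monou: "is_mono Au Bu (\<lambda>n y. y)"
    unfolding is_mono_def is_map_def using SB by auto
  have llp: "llp (pp_dom term_psh Ipsh (delta k) Au Bu (\<lambda>n y. y)) (prod_psh Ipsh Bu)
            (pp_map (delta k) (\<lambda>n y. y)) X Y p"
    using fib psAu psBu monou unfolding is_fibration_def by blast
  let ?C = "prod_psh term_psh Au" and ?A = "prod_psh term_psh Bu" and ?B = "prod_psh Ipsh Au"
  let ?f = "\<lambda>(n::nat) (xx :: unit \<times> 'u). (fst xx, snd xx)"
  let ?g = "\<lambda>n (xx :: unit \<times> 'u). (delta k n (fst xx), snd xx)"
  have ppd: "pp_dom term_psh Ipsh (delta k) Au Bu (\<lambda>n y. y) = pushout ?C ?A ?B ?f ?g"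
    unfolding pp_dom_def by simp
  define hl where "hl (n::nat) (ty :: unit \<times> 'u) = \<alpha> n (ie n (snd ty))" for n ty
  define hr where "hr (n::nat) (iy :: (bool list \<Rightarrow> bool list) \<times> 'u) = \<beta> n (fst iy, ie n (snd iy))" for n iy
  define u where "u = po_copair hl hr"
  have psC: "is_psh ?C" by (rule is_psh_prod[OF is_psh_term psAu])
  have fm: "is_map ?C ?A ?f" unfolding is_map_def using SB by auto
  have gm: "is_map ?C ?B ?g" unfolding is_map_def by auto
  have hlm: "is_map ?A X hl" unfolding is_map_def hl_def
    using is_mapD1[OF al] is_mapD2[OF al] Bcl by auto
  have hrm: "is_map ?B X hr" unfolding is_map_def hr_def
    using is_mapD1[OF be] is_mapD2[OF be] Scl SB by auto
  have hcmp: "\<And>n c. c \<in> obj ?C n \<Longrightarrow> hl n (?f n c) = hr n (?g n c)"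
    unfolding hl_def hr_def using cmp SB by auto
  have um: "is_map (pp_dom term_psh Ipsh (delta k) Au Bu (\<lambda>n y. y)) X u"
    unfolding ppd u_def by (rule is_map_copair[OF psC fm gm hlm hrm hcmp])
  define vv where "vv (n::nat) (iy :: (bool list \<Rightarrow> bool list) \<times> 'u) = v n (fst iy, ie n (snd iy))" for n iy
  have vvm: "is_map (prod_psh Ipsh Bu) Y vv" unfolding is_map_def vv_def
    using is_mapD1[OF vm] is_mapD2[OF vm] Bcl by auto
  define ql where "ql (n::nat) (xy :: unit \<times> 'u) = (delta k n (fst xy), snd xy)" for n xy
  define qr where "qr (n::nat) (yx :: (bool list \<Rightarrow> bool list) \<times> 'u) = (fst yx, snd yx)" for n yx
  have ppm: "pp_map (delta k) (\<lambda>n y. y) = po_copair ql qr"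
    unfolding pp_map_def ql_def qr_def by simp
  have qcmp: "\<And>n c. c \<in> obj ?C n \<Longrightarrow> ql n (?f n c) = qr n (?g n c)"
    unfolding ql_def qr_def by auto
  have ppm_cls: "pp_map (delta k) (\<lambda>n y. y) n (po_rel ?C ?A ?B ?f ?g n `` {x}) = case_sum (ql n) (qr n) x" for n x
    unfolding ppm by (rule po_copair_cls) (rule qcmp)
  have u_cls: "u n (po_rel ?C ?A ?B ?f ?g n `` {x}) = case_sum (hl n) (hr n) x" for n x
    unfolding u_def by (rule po_copair_cls) (rule hcmp)
  have comm: "\<forall>n a. a \<in> obj (pp_dom term_psh Ipsh (delta k) Au Bu (\<lambda>n y. y)) n \<longrightarrow>
      p n (u n a) = vv n (pp_map (delta k) (\<lambda>n y. y) n a)"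
  proof (intro allI impI)
    fix n a assume "a \<in> obj (pp_dom term_psh Ipsh (delta k) Au Bu (\<lambda>n y. y)) n"
    then obtain x where x: "x \<in> obj ?A n <+> obj ?B n" "a = po_rel ?C ?A ?B ?f ?g n `` {x}"
      unfolding ppd by (rule po_obj_cases)
    show "p n (u n a) = vv n (pp_map (delta k) (\<lambda>n y. y) n a)"
      unfolding x(2) ppm_cls u_cls using x(1)
      by (auto simp: hl_def hr_def vv_def ql_def qr_def pa pb SB)
  qed
  obtain D where Dm: "is_map (prod_psh Ipsh Bu) X D"
    and D1: "\<And>n a. a \<in> obj (pp_dom term_psh Ipsh (delta k) Au Bu (\<lambda>n y. y)) n \<Longrightarrow>
               D n (pp_map (delta k) (\<lambda>n y. y) n a) = u n a"
    and D2: "\<And>n b. b \<in> obj (prod_psh Ipsh Bu) n \<Longrightarrow> p n (D n b) = vv n b"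
    using llp um vvm comm unfolding llp_def by blast
  define d where "d (n::nat) (ib :: (bool list \<Rightarrow> bool list) \<times> 'd) = D n (fst ib, e n (snd ib))" for n ib
  have "lsol k B S \<alpha> \<beta> v X Y p (obj B) d"
    unfolding lsol_def
  proof (intro conjI allI impI)
    show "is_map (prod_psh Ipsh (subpsh B (obj B))) X d"
    proof (unfold is_map_def, intro conjI allI impI)
      fix n x assume "x \<in> obj (prod_psh Ipsh (subpsh B (obj B))) n"
      then show "d n x \<in> obj X n" unfolding d_def using is_mapD1[OF Dm] by auto
    next
      fix m n f x assume f: "f \<in> shom m n" and x: "x \<in> obj (prod_psh Ipsh (subpsh B (obj B))) n"
      have "x \<in> obj (prod_psh Ipsh B) n" using x by simp
      then have "(fst x, e n (snd x)) \<in> obj (prod_psh Ipsh Bu) n" by auto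
      from is_mapD2[OF Dm f this] x
      show "d m (act (prod_psh Ipsh (subpsh B (obj B))) m n f x) = act X m n f (d n x)"
        unfolding d_def by auto
    qed
  next
    fix n b assume b: "b \<in> obj B n"
    have "Inl ((), e n b) \<in> obj ?A n <+> obj ?B n" using b by auto
    from D1[unfolded ppd, OF po_cls_obj[OF this]]
    show "d n (delta k n (), b) = \<alpha> n b"
      unfolding ppm_cls u_cls d_def using b by (simp add: ql_def hl_def)
  next
    fix n i s assume i: "i \<in> shom n 1" and s: "s \<in> S n"
    have "Inr (i, e n s) \<in> obj ?A n <+> obj ?B n" using i s by auto
    from D1[unfolded ppd, OF po_cls_obj[OF this]]
    show "d n (i, s) = \<beta> n (i, s)"
      unfolding ppm_cls u_cls d_def using s SB by (simp add: qr_def hr_def)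
  next
    fix n i b assume i: "i \<in> shom n 1" and b: "b \<in> obj B n"
    show "p n (d n (i, b)) = v n (i, b)"
      using D2[of "(i, e n b)" n] i b by (simp add: d_def vv_def)
  qed
  then show ?thesis by blast
qed



definition gr :: "(nat \<Rightarrow> 'b set) \<Rightarrow> (nat \<Rightarrow> (bool list \<Rightarrow> bool list) \<times> 'b \<Rightarrow> 'x)
    \<Rightarrow> (nat \<times> ((bool list \<Rightarrow> bool list) \<times> 'b) \<times> 'x) set" where
  "gr T d = {(n, (i, b), d n (i, b)) | n i b. i \<in> shom n 1 \<and> b \<in> T n}"

lemma gr_mem: "(n, (i, b), x) \<in> gr T d \<longleftrightarrow> i \<in> shom n 1 \<and> b \<in> T n \<and> x = d n (i, b)"
  unfolding gr_def by auto

lemma gr_dom: "b \<in> T n \<longleftrightarrow> (\<exists>i x. (n, (i, b), x) \<in> gr T d)"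
  unfolding gr_mem using delta_shom by blast

lemma gr_sub:
  assumes "gr T d \<subseteq> gr T' d'" "b \<in> T n" "i \<in> shom n 1"
  shows "b \<in> T' n" "d' n (i, b) = d n (i, b)"
proof -
  have "(n, (i, b), d n (i, b)) \<in> gr T d" using assms(2,3) by (simp add: gr_mem)
  then have "(n, (i, b), d n (i, b)) \<in> gr T' d'" using assms(1) by blast
  then show "b \<in> T' n" "d' n (i, b) = d n (i, b)" by (simp_all add: gr_mem)
qed

lemma finite_cube: "finite (cube n)"
proof -
  have "cube n = {xs. set xs \<subseteq> (UNIV :: bool set) \<and> length xs = n}" by (auto simp: cube_def)
  then show ?thesis using finite_lists_length_eq[of "UNIV :: bool set" n] by simp
qed

lemma finite_shom: "finite (shom m n)"
proof -
  have "shom m n \<subseteq> (\<Pi>\<^sub>E x \<in> cube m. cube n)" unfolding shom_def PiE_def by auto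
  moreover have "finite (\<Pi>\<^sub>E x \<in> cube m. cube n)" by (rule finite_PiE) (auto simp: finite_cube simp del: cube_iff)
  ultimately show ?thesis by (rule finite_subset)
qed

definition good where
  "good k B S \<alpha> \<beta> v X Y p T d \<longleftrightarrow> subclosed B T \<and> (\<forall>n. S n \<subseteq> T n) \<and> lsol k B S \<alpha> \<beta> v X Y p T d"

lemma subpsh_subpsh[simp]: "subpsh (subpsh B G) T = subpsh B T"
  by (simp add: subpsh_def)

lemma obj_subpsh'[simp]: "obj (subpsh B T) = T"
  by (simp add: subpsh_def)

lemma goodD:
  assumes "good k B S \<alpha> \<beta> v X Y p T d"
  shows "\<And>n b. b \<in> T n \<Longrightarrow> b \<in> obj B n"
    and "\<And>m n f x. f \<in> shom m n \<Longrightarrow> x \<in> T n \<Longrightarrow> act B m n f x \<in> T m"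
    and "\<And>n s. s \<in> S n \<Longrightarrow> s \<in> T n"
    and "is_map (prod_psh Ipsh (subpsh B T)) X d"
    and "\<And>n b. b \<in> T n \<Longrightarrow> d n (delta k n (), b) = \<alpha> n b"
    and "\<And>n i s. i \<in> shom n 1 \<Longrightarrow> s \<in> S n \<Longrightarrow> d n (i, s) = \<beta> n (i, s)"
    and "\<And>n i b. i \<in> shom n 1 \<Longrightarrow> b \<in> T n \<Longrightarrow> p n (d n (i, b)) = v n (i, b)"
  using assms unfolding good_def lsol_def subclosed_def by blast+

lemma lift_sub:
  fixes B :: "'d psh" and X :: "'x psh" and Y :: "'y psh"
  assumes inf: "infinite (UNIV :: 'u set)"
    and fib: "is_fibration TYPE('u) X Y p"
    and pr: "lprob k B S \<alpha> \<beta> v X Y p"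
  shows "\<exists>d. lsol k B S \<alpha> \<beta> v X Y p (obj B) d"
proof -
  from pr have psB: "is_psh B" and scS: "subclosed B S" and al: "is_map B X \<alpha>"
    and be: "is_map (prod_psh Ipsh (subpsh B S)) X \<beta>"
    and cmp: "\<And>n s. s \<in> S n \<Longrightarrow> \<beta> n (delta k n (), s) = \<alpha> n s"
    and vm: "is_map (prod_psh Ipsh B) Y v"
    and pa: "\<And>n b. b \<in> obj B n \<Longrightarrow> p n (\<alpha> n b) = v n (delta k n (), b)"
    and pb: "\<And>n i s. i \<in> shom n 1 \<Longrightarrow> s \<in> S n \<Longrightarrow> p n (\<beta> n (i, s)) = v n (i, s)"
    unfolding lprob_def by blast+
  have Bcl: "\<And>m n f x. f \<in> shom m n \<Longrightarrow> x \<in> obj B n \<Longrightarrow> act B m n f x \<in> obj B m"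
    using psB unfolding is_psh_def by blast
  have Bid: "\<And>n x. x \<in> obj B n \<Longrightarrow> act B n n (cid n) x = x"
    using psB unfolding is_psh_def by blast
  have Bcomp: "\<And>l m n f g x. f \<in> shom l m \<Longrightarrow> g \<in> shom m n \<Longrightarrow> x \<in> obj B n \<Longrightarrow>
         act B l n (compose (cube l) g f) x = act B l m f (act B m n g x)"
    using psB unfolding is_psh_def by blast
  define \<A> where "\<A> = {gr T d | T d. good k B S \<alpha> \<beta> v X Y p T d}"
  have "\<exists>U\<in>\<A>. \<forall>G\<in>C. G \<subseteq> U" if C: "C \<in> chains \<A>" for C
  proof (cases "C = {}")
    case True
    have "good k B S \<alpha> \<beta> v X Y p S \<beta>"
      unfolding good_def lsol_def using scS be cmp pb by blast
    then have "gr S \<beta> \<in> \<A>" unfolding \<A>_def by blast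
    then show ?thesis using True by blast
  next
    case False
    have CA: "C \<subseteq> \<A>" using chainsD2[OF C] .
    have rep: "\<exists>T d. G = gr T d \<and> good k B S \<alpha> \<beta> v X Y p T d" if "G \<in> C" for G
      using that CA unfolding \<A>_def by blast
    define T where "T n = {b. \<exists>G\<in>C. \<exists>i x. (n, (i, b), x) \<in> G}" for n
    define d where "d n ib = (THE x. (n, ib, x) \<in> \<Union>C)" for n ib
    have func: "x = y" if xy: "(n, ib, x) \<in> \<Union>C" "(n, ib, y) \<in> \<Union>C" for n ib x y
    proof -
      obtain G1 G2 where G: "G1 \<in> C" "G2 \<in> C" "(n, ib, x) \<in> G1" "(n, ib, y) \<in> G2" using xy by blast
      have "G1 \<subseteq> G2 \<or> G2 \<subseteq> G1" using chainsD[OF C G(1,2)] .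
      then obtain G where GG: "G \<in> C" "(n, ib, x) \<in> G" "(n, ib, y) \<in> G"
      proof
        assume "G1 \<subseteq> G2" then show thesis using that[of G2] G by blast
      next
        assume "G2 \<subseteq> G1" then show thesis using that[of G1] G by blast
      qed
      then obtain T' d' where GT: "G = gr T' d'" using rep by blast
      obtain i b where ib: "ib = (i, b)" by (cases ib)
      have "x = d' n (i, b)" using GG(2) unfolding GT ib by (simp add: gr_mem)
      moreover have "y = d' n (i, b)" using GG(3) unfolding GT ib by (simp add: gr_mem)
      ultimately show "x = y" by simp
    qed
    have dval: "d n (i, b) = d' n (i, b)" if dv: "gr T' d' \<in> C" "b \<in> T' n" "i \<in> shom n 1" for T' d' n i b
    proof -
      have "(n, (i, b), d' n (i, b)) \<in> gr T' d'" using dv(2,3) by (simp add: gr_mem)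
      then have h: "(n, (i, b), d' n (i, b)) \<in> \<Union>C" using dv(1) by blast
      show ?thesis unfolding d_def
      proof (rule the_equality)
        show "(n, (i, b), d' n (i, b)) \<in> \<Union>C" by (rule h)
        fix x assume "(n, (i, b), x) \<in> \<Union>C"
        then show "x = d' n (i, b)" using func h by blast
      qed
    qed
    have TmemD: "\<exists>T' d'. gr T' d' \<in> C \<and> good k B S \<alpha> \<beta> v X Y p T' d' \<and> b \<in> T' n" if bT: "b \<in> T n" for b n
    proof -
      from bT obtain G i x where G: "G \<in> C" "(n, (i, b), x) \<in> G" unfolding T_def by blast
      from rep[OF G(1)] obtain T' d' where TT: "G = gr T' d'" "good k B S \<alpha> \<beta> v X Y p T' d'" by blast
      have "b \<in> T' n" using G(2) unfolding TT(1) by (simp add: gr_mem)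
      then show ?thesis using G(1)[unfolded TT(1)] TT(2) by blast
    qed
    have TmemI: "b \<in> T n" if tt: "gr T' d' \<in> C" "b \<in> T' n" for T' d' b n
    proof -
      have "(n, (delta k n (), b), d' n (delta k n (), b)) \<in> gr T' d'" using tt(2) by (simp add: gr_mem)
      then show ?thesis unfolding T_def using tt(1) by blast
    qed
    obtain G0 where G0: "G0 \<in> C" using False by blast
    then obtain T0 d0 where G0': "G0 = gr T0 d0" "good k B S \<alpha> \<beta> v X Y p T0 d0" using rep by blast
    have ST: "S n \<subseteq> T n" for n
      using TmemI[OF G0[unfolded G0'(1)]] goodD(3)[OF G0'(2)] by blast
    have gd: "good k B S \<alpha> \<beta> v X Y p T d"
      unfolding good_def lsol_def subclosed_def
    proof (intro conjI allI impI)
      show "T n \<subseteq> obj B n" for n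
      proof
        fix b assume "b \<in> T n"
        then obtain T' d' where T': "gr T' d' \<in> C" "good k B S \<alpha> \<beta> v X Y p T' d'" "b \<in> T' n" using TmemD by blast
        show "b \<in> obj B n" using goodD(1)[OF T'(2) T'(3)] .
      qed
      show "S n \<subseteq> T n" for n by (rule ST)
    next
      fix m n f x assume f: "f \<in> shom m n" and x: "x \<in> T n"
      then obtain T' d' where T': "gr T' d' \<in> C" "good k B S \<alpha> \<beta> v X Y p T' d'" "x \<in> T' n" using TmemD by blast
      then have "act B m n f x \<in> T' m" using goodD(2)[OF T'(2) f T'(3)] by blast
      then show "act B m n f x \<in> T m" using TmemI[OF T'(1)] by blast
    next
      show "is_map (prod_psh Ipsh (subpsh B T)) X d"
      proof (unfold is_map_def, intro conjI allI impI)
        fix n ib assume "ib \<in> obj (prod_psh Ipsh (subpsh B T)) n"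
        then obtain i b where ib: "ib = (i, b)" "i \<in> shom n 1" "b \<in> T n" by auto
        then obtain T' d' where T': "gr T' d' \<in> C" "good k B S \<alpha> \<beta> v X Y p T' d'" "b \<in> T' n" using TmemD by blast
        then have "d' n (i, b) \<in> obj X n" using ib unfolding good_def lsol_def is_map_def by auto
        then show "d n ib \<in> obj X n" using dval[OF T'(1) T'(3) ib(2)] ib by simp
      next
        fix m n f ib assume f: "f \<in> shom m n" and "ib \<in> obj (prod_psh Ipsh (subpsh B T)) n"
        then obtain i b where ib: "ib = (i, b)" "i \<in> shom n 1" "b \<in> T n" by auto
        then obtain T' d' where T': "gr T' d' \<in> C" "good k B S \<alpha> \<beta> v X Y p T' d'" "b \<in> T' n" using TmemD by blast
        have b': "act B m n f b \<in> T' m" using goodD(2)[OF T'(2) f T'(3)] .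
        have i': "compose (cube m) i f \<in> shom m 1" using shom_compose[OF f ib(2)] .
        have "(i, b) \<in> obj (prod_psh Ipsh (subpsh B T')) n" using ib(2) T'(3) by simp
        from is_mapD2[OF goodD(4)[OF T'(2)] f this]
        have "d' m (compose (cube m) i f, act B m n f b) = act X m n f (d' n (i, b))" by simp
        then show "d m (act (prod_psh Ipsh (subpsh B T)) m n f ib) = act X m n f (d n ib)"
          using dval[OF T'(1) T'(3) ib(2)] dval[OF T'(1) b' i'] ib by simp
      qed
    next
      fix n b assume "b \<in> T n"
      then obtain T' d' where T': "gr T' d' \<in> C" "good k B S \<alpha> \<beta> v X Y p T' d'" "b \<in> T' n" using TmemD by blast
      then show "d n (delta k n (), b) = \<alpha> n b"
        using dval[OF T'(1) T'(3) delta_shom] goodD(5)[OF T'(2) T'(3)] by simp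
    next
      fix n i s assume i: "i \<in> shom n 1" and s: "s \<in> S n"
      then have s0: "s \<in> T0 n" using goodD(3)[OF G0'(2)] by blast
      show "d n (i, s) = \<beta> n (i, s)"
        using dval[OF G0[unfolded G0'(1)] s0 i] goodD(6)[OF G0'(2) i s] by simp
    next
      fix n i b assume i: "i \<in> shom n 1" and "b \<in> T n"
      then obtain T' d' where T': "gr T' d' \<in> C" "good k B S \<alpha> \<beta> v X Y p T' d'" "b \<in> T' n" using TmemD by blast
      then show "p n (d n (i, b)) = v n (i, b)"
        using dval[OF T'(1) T'(3) i] goodD(7)[OF T'(2) i T'(3)] by simp
    qed
    have UA: "gr T d \<in> \<A>" using gd unfolding \<A>_def by blast
    have UB: "G \<subseteq> gr T d" if GC: "G \<in> C" for G
    proof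
      fix z assume z: "z \<in> G"
      obtain T' d' where T': "G = gr T' d'" "good k B S \<alpha> \<beta> v X Y p T' d'" using rep[OF GC] by blast
      obtain n i b where zz: "z = (n, (i, b), d' n (i, b))" "i \<in> shom n 1" "b \<in> T' n"
        using z T'(1) unfolding gr_def by blast
      have GC': "gr T' d' \<in> C" using GC T'(1) by simp
      have "b \<in> T n" using TmemI[OF GC' zz(3)] .
      then show "z \<in> gr T d" using zz dval[OF GC' zz(3) zz(2)] by (simp add: gr_mem)
    qed
    show ?thesis by (rule bexI[OF _ UA]) (use UB in blast)
  qed
  then have "\<forall>C\<in>chains \<A>. \<exists>U\<in>\<A>. \<forall>G\<in>C. G \<subseteq> U" by (rule ballI)
  from Zorn_Lemma2[OF this] obtain M where M: "M \<in> \<A>" "\<forall>G\<in>\<A>. M \<subseteq> G \<longrightarrow> G = M" by (elim bexE) 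
  from M(1) obtain T d where Md: "M = gr T d" "good k B S \<alpha> \<beta> v X Y p T d" unfolding \<A>_def by blast
  have TB: "T n = obj B n" for n
  proof (rule ccontr)
    assume "T n \<noteq> obj B n"
    moreover have "T n \<subseteq> obj B n" using Md(2) unfolding good_def subclosed_def by blast
    ultimately obtain x0 where x0: "x0 \<in> obj B n" "x0 \<notin> T n" by blast
    define G where "G l = (\<lambda>f. act B l n f x0) ` shom l n" for l
    have Gsub: "y \<in> G l \<Longrightarrow> y \<in> obj B l" for y l unfolding G_def using Bcl x0(1) by blast
    have Gcl: "act B m l h y \<in> G m" if h: "h \<in> shom m l" and y: "y \<in> G l" for m l h y
    proof -
      from y obtain f where f: "f \<in> shom l n" "y = act B l n f x0" unfolding G_def by blast
      have "act B m l h y = act B m n (compose (cube m) f h) x0"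
        using Bcomp[OF h f(1) x0(1)] f(2) by simp
      then show ?thesis unfolding G_def using shom_compose[OF h f(1)] by blast
    qed
    have x0G: "x0 \<in> G n" unfolding G_def using Bid[OF x0(1)] cid_shom by force
    have Gcnt: "countable (G l)" for l
      unfolding G_def using finite_shom by (intro countable_finite) simp
    define B2 where "B2 = subpsh B G"
    define T2 where "T2 l = T l \<inter> G l" for l
    have oB2[simp]: "obj B2 l = G l" for l by (simp add: B2_def)
    have aB2[simp]: "act B2 = act B" by (simp add: B2_def)
    have psB2: "is_psh B2"
      unfolding is_psh_def using Gcl Gsub Bid Bcomp by simp
    have pr2: "lprob k B2 T2 \<alpha> d v X Y p"
      unfolding lprob_def
    proof (intro conjI)
      show "is_psh B2" by (rule psB2)
      show "subclosed B2 T2" unfolding subclosed_def T2_def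
        using goodD(2)[OF Md(2)] Gcl by auto
      show "is_map B2 X \<alpha>" unfolding is_map_def using is_mapD1[OF al] is_mapD2[OF al] Gsub by auto
      show "is_map (prod_psh Ipsh (subpsh B2 T2)) X d"
        unfolding is_map_def using is_mapD1[OF goodD(4)[OF Md(2)]] is_mapD2[OF goodD(4)[OF Md(2)]]
        by (auto simp: T2_def)
      show "\<forall>n s. s \<in> T2 n \<longrightarrow> d n (delta k n (), s) = \<alpha> n s"
        using goodD(5)[OF Md(2)] by (auto simp: T2_def)
      show "is_map (prod_psh Ipsh B2) Y v" unfolding is_map_def using is_mapD1[OF vm] is_mapD2[OF vm] Gsub by auto
      show "\<forall>n b. b \<in> obj B2 n \<longrightarrow> p n (\<alpha> n b) = v n (delta k n (), b)" using pa Gsub by auto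
      show "\<forall>n i s. i \<in> shom n 1 \<longrightarrow> s \<in> T2 n \<longrightarrow> p n (d n (i, s)) = v n (i, s)"
        using goodD(7)[OF Md(2)] by (auto simp: T2_def)
    qed
    obtain d2 where d2: "lsol k B2 T2 \<alpha> d v X Y p (obj B2) d2"
      using lift_small[OF inf fib pr2] Gcnt by auto
    have d2m: "is_map (prod_psh Ipsh (subpsh B G)) X d2" and d2a: "\<And>l b. b \<in> G l \<Longrightarrow> d2 l (delta k l (), b) = \<alpha> l b"
      and d2b: "\<And>l i s. i \<in> shom l 1 \<Longrightarrow> s \<in> T l \<Longrightarrow> s \<in> G l \<Longrightarrow> d2 l (i, s) = d l (i, s)"
      and d2p: "\<And>l i b. i \<in> shom l 1 \<Longrightarrow> b \<in> G l \<Longrightarrow> p l (d2 l (i, b)) = v l (i, b)"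
      using d2 unfolding lsol_def T2_def B2_def[symmetric] by (auto simp: B2_def)
    define T' where "T' l = T l \<union> G l" for l
    define d' where "d' l ib = (if snd ib \<in> T l then d l ib else d2 l ib)" for l ib
    have gd': "good k B S \<alpha> \<beta> v X Y p T' d'"
      unfolding good_def lsol_def subclosed_def
    proof (intro conjI allI impI)
      show "T' l \<subseteq> obj B l" for l unfolding T'_def using goodD(1)[OF Md(2)] Gsub by blast
      show "S l \<subseteq> T' l" for l unfolding T'_def using goodD(3)[OF Md(2)] by blast
    next
      fix m l f x assume f: "f \<in> shom m l" and x: "x \<in> T' l"
      then show "act B m l f x \<in> T' m" unfolding T'_def using goodD(2)[OF Md(2)] Gcl by blast
    next
      show "is_map (prod_psh Ipsh (subpsh B T')) X d'"
      proof (unfold is_map_def, intro conjI allI impI)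
        fix l ib assume "ib \<in> obj (prod_psh Ipsh (subpsh B T')) l"
        then obtain i b where ib: "ib = (i, b)" "i \<in> shom l 1" "b \<in> T' l" by auto
        show "d' l ib \<in> obj X l"
        proof (cases "b \<in> T l")
          case True
          then show ?thesis using is_mapD1[OF goodD(4)[OF Md(2)], of "(i, b)" l] ib by (simp add: d'_def)
        next
          case False
          then have "b \<in> G l" using ib(3) unfolding T'_def by blast
          then show ?thesis using is_mapD1[OF d2m, of "(i, b)" l] ib False by (simp add: d'_def)
        qed
      next
        fix m l f ib assume f: "f \<in> shom m l" and "ib \<in> obj (prod_psh Ipsh (subpsh B T')) l"
        then obtain i b where ib: "ib = (i, b)" "i \<in> shom l 1" "b \<in> T' l" by auto
        have i': "compose (cube m) i f \<in> shom m 1" using shom_compose[OF f ib(2)] .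
        show "d' m (act (prod_psh Ipsh (subpsh B T')) m l f ib) = act X m l f (d' l ib)"
        proof (cases "b \<in> T l")
          case True
          have bm: "act B m l f b \<in> T m" using goodD(2)[OF Md(2) f True] .
          have "(i, b) \<in> obj (prod_psh Ipsh (subpsh B T)) l" using ib(2) True by simp
          from is_mapD2[OF goodD(4)[OF Md(2)] f this]
          show ?thesis using ib True bm by (simp add: d'_def)
        next
          case False
          then have bG: "b \<in> G l" using ib(3) unfolding T'_def by blast
          have bm: "act B m l f b \<in> G m" using Gcl[OF f bG] .
          have "(i, b) \<in> obj (prod_psh Ipsh (subpsh B G)) l" using ib(2) bG by simp
          from is_mapD2[OF d2m f this]
          have e: "d2 m (compose (cube m) i f, act B m l f b) = act X m l f (d2 l (i, b))" by simp
          have e2: "d' m (compose (cube m) i f, act B m l f b) = d2 m (compose (cube m) i f, act B m l f b)"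
            using d2b[OF i' _ bm] by (simp add: d'_def)
          show ?thesis using ib False e e2 by (simp add: d'_def)
        qed
      qed
    next
      fix l b assume "b \<in> T' l"
      then show "d' l (delta k l (), b) = \<alpha> l b"
        using goodD(5)[OF Md(2)] d2a unfolding T'_def d'_def by auto
    next
      fix l i s assume i: "i \<in> shom l 1" and s: "s \<in> S l"
      then have "s \<in> T l" using goodD(3)[OF Md(2)] by blast
      then show "d' l (i, s) = \<beta> l (i, s)" using goodD(6)[OF Md(2) i s] by (simp add: d'_def)
    next
      fix l i b assume i: "i \<in> shom l 1" and "b \<in> T' l"
      then show "p l (d' l (i, b)) = v l (i, b)"
        using goodD(7)[OF Md(2) i] d2p[OF i] unfolding T'_def d'_def by auto
    qed
    have A': "gr T' d' \<in> \<A>" using gd' unfolding \<A>_def by blast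
    have sub: "M \<subseteq> gr T' d'"
    proof
      fix z assume "z \<in> M"
      then obtain l i b where zz: "z = (l, (i, b), d l (i, b))" "i \<in> shom l 1" "b \<in> T l"
        unfolding Md(1) gr_def by blast
      then show "z \<in> gr T' d'" by (simp add: gr_mem T'_def d'_def)
    qed
    have "gr T' d' = gr T d" using M(2) A' sub Md(1) by blast
    moreover have "(n, (delta k n (), x0), d' n (delta k n (), x0)) \<in> gr T' d'"
      using x0G by (simp add: gr_mem T'_def)
    ultimately have "x0 \<in> T n" by (simp add: gr_mem)
    then show False using x0(2) by blast
  qed
  have "T = obj B" using TB by auto
  then show ?thesis using Md(2) unfolding good_def by blast
qed



lemma subpsh_obj[simp]: "subpsh B (obj B) = B"
  by (simp add: subpsh_def)

lemma ijoin_shom1[simp]: "f \<in> shom n (Suc 0) \<Longrightarrow> g \<in> shom n (Suc 0) \<Longrightarrow> ijoin n f g \<in> shom n (Suc 0)"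
  using ijoin_shom[of f n g] by simp

lemma ijoin_delta0'[simp]: "f \<in> shom n (Suc 0) \<Longrightarrow> ijoin n f (delta False n u) = f"
  using ijoin_delta0[of f n] by simp

lemma ijoin_delta1'[simp]: "f \<in> shom n (Suc 0) \<Longrightarrow> ijoin n f (delta True n u) = delta True n u"
  using ijoin_delta1[of f n] by simp

theorem mainTheorem2:
  fixes A :: "'a psh" and B :: "'b psh"
    and r :: "nat \<Rightarrow> 'b \<Rightarrow> (bool list \<Rightarrow> bool list)"
    and m :: "nat \<Rightarrow> 'a \<Rightarrow> 'b"
    and X :: "'x psh" and Y :: "'y psh" and p :: "nat \<Rightarrow> 'x \<Rightarrow> 'y"
  assumes "infinite (UNIV :: 'u set)"
    and "is_psh A" and "is_psh B"
    and "is_map B Ipsh r"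
    and "is_mono A B m"
    and "is_psh X" and "is_psh Y"
    and "is_fibration TYPE('u) X Y p"
  shows "llp (mcyl A B r m) (prod_psh Ipsh B) (mcyl_map r m) X Y p"
proof -
  note inf = assms(1) and psA = assms(2) and psB = assms(3) and rm = assms(4)
    and fib = assms(8)
  have mm: "is_map A B m" and minj: "\<And>n. inj_on (m n) (obj A n)"
    using assms(5) unfolding is_mono_def by blast+
  have Acl: "\<And>l n f x. f \<in> shom l n \<Longrightarrow> x \<in> obj A n \<Longrightarrow> act A l n f x \<in> obj A l"
    using psA unfolding is_psh_def by blast
  have Bcl: "\<And>l n f x. f \<in> shom l n \<Longrightarrow> x \<in> obj B n \<Longrightarrow> act B l n f x \<in> obj B l"
    using psB unfolding is_psh_def by blast
  have rS: "\<And>n b. b \<in> obj B n \<Longrightarrow> r n b \<in> shom n 1" using is_mapD1[OF rm] by simp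
  have rN: "\<And>l n f b. f \<in> shom l n \<Longrightarrow> b \<in> obj B n \<Longrightarrow> r l (act B l n f b) = compose (cube l) (r n b) f"
    using is_mapD2[OF rm] by simp
  have mS: "\<And>n a. a \<in> obj A n \<Longrightarrow> m n a \<in> obj B n" using is_mapD1[OF mm] .
  have mN: "\<And>l n f a. f \<in> shom l n \<Longrightarrow> a \<in> obj A n \<Longrightarrow> m l (act A l n f a) = act B l n f (m n a)"
    using is_mapD2[OF mm] .
  define minv where "minv n = inv_into (obj A n) (m n)" for n
  have minv_m[simp]: "minv n (m n a) = a" if "a \<in> obj A n" for n a
    using minj that unfolding minv_def by simp
  define \<phi> where "\<phi> n a = (r n (m n a), a)" for n a
  have phim: "is_map A (prod_psh Ipsh A) \<phi>"
    unfolding is_map_def \<phi>_def using rS mS rN mN Acl by auto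
  let ?r = "po_rel A B (prod_psh Ipsh A) m \<phi>"
  have mcyl_eq: "mcyl A B r m = pushout A B (prod_psh Ipsh A) m \<phi>"
    unfolding mcyl_def \<phi>_def by simp
  show ?thesis
    unfolding llp_def
  proof (intro allI impI)
    fix u :: "nat \<Rightarrow> ('b + (bool list \<Rightarrow> bool list) \<times> 'a) set \<Rightarrow> 'x" and v
    assume um: "is_map (mcyl A B r m) X u" and vm: "is_map (prod_psh Ipsh B) Y v"
      and comm: "\<forall>n a. a \<in> obj (mcyl A B r m) n \<longrightarrow> p n (u n a) = v n (mcyl_map r m n a)"
    define uB where "uB n b = u n (?r n `` {Inl b})" for n b
    define uA where "uA n ia = u n (?r n `` {Inr ia})" for n ia
    have clsB: "?r n `` {Inl b} \<in> obj (mcyl A B r m) n" if "b \<in> obj B n" for n b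
      unfolding mcyl_eq using that by (intro po_cls_obj) auto
    have clsA: "?r n `` {Inr (i, a)} \<in> obj (mcyl A B r m) n" if "i \<in> shom n 1" "a \<in> obj A n" for n i a
      unfolding mcyl_eq using that by (intro po_cls_obj) auto
    have actcls: "act (mcyl A B r m) l n f (?r n `` {x}) = ?r l `` {map_sum (act B l n f) (act (prod_psh Ipsh A) l n f) x}"
      if "f \<in> shom l n" for l n f x
      unfolding mcyl_eq by (rule po_act_cls[OF psA mm phim that])
    have uBm: "is_map B X uB"
    proof (unfold is_map_def, intro conjI allI impI)
      fix n b assume "b \<in> obj B n"
      then show "uB n b \<in> obj X n" unfolding uB_def using is_mapD1[OF um clsB] by blast
    next
      fix l n f b assume f: "f \<in> shom l n" and b: "b \<in> obj B n"
      show "uB l (act B l n f b) = act X l n f (uB n b)"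
        unfolding uB_def using is_mapD2[OF um f clsB[OF b]] actcls[OF f] by simp
    qed
    have uAm: "is_map (prod_psh Ipsh A) X uA"
    proof (unfold is_map_def, intro conjI allI impI)
      fix n ia assume "ia \<in> obj (prod_psh Ipsh A) n"
      then show "uA n ia \<in> obj X n" unfolding uA_def using is_mapD1[OF um clsA] by (cases ia) auto
    next
      fix l n f ia assume f: "f \<in> shom l n" and ia: "ia \<in> obj (prod_psh Ipsh A) n"
      obtain i a where ia': "ia = (i, a)" "i \<in> shom n 1" "a \<in> obj A n" using ia by auto
      show "uA l (act (prod_psh Ipsh A) l n f ia) = act X l n f (uA n ia)"
        unfolding uA_def using is_mapD2[OF um f clsA[OF ia'(2,3)]] actcls[OF f] ia'(1) by simp
    qed
    have uBA: "uB n (m n a) = uA n (r n (m n a), a)" if "a \<in> obj A n" for n a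
    proof -
      have "(Inl (m n a), Inr (\<phi> n a)) \<in> ?r n" by (rule po_rel_gen[OF that])
      then show ?thesis unfolding uB_def uA_def \<phi>_def by (simp add: po_cls_eq)
    qed
    have mapcmp: "\<And>n c. c \<in> obj A n \<Longrightarrow> (\<lambda>n b. (r n b, b)) n (m n c) = (\<lambda>n ia. (fst ia, m n (snd ia))) n (\<phi> n c)"
      by (simp add: \<phi>_def)
    have mapB: "mcyl_map r m n (?r n `` {Inl b}) = (r n b, b)" for n b
      unfolding mcyl_map_def by (subst po_copair_cls[where hl="\<lambda>n b. (r n b, b)" and hr="\<lambda>n ia. (fst ia, m n (snd ia))" and f=m and g=\<phi> and C=A and n=n]) (simp_all add: \<phi>_def)
    have mapA: "mcyl_map r m n (?r n `` {Inr (i, a)}) = (i, m n a)" for n i a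
      unfolding mcyl_map_def by (subst po_copair_cls[where hl="\<lambda>n b. (r n b, b)" and hr="\<lambda>n ia. (fst ia, m n (snd ia))" and f=m and g=\<phi> and C=A and n=n]) (simp_all add: \<phi>_def)
    have pB: "p n (uB n b) = v n (r n b, b)" if "b \<in> obj B n" for n b
      using comm clsB[OF that] mapB unfolding uB_def by simp
    have pA: "p n (uA n (i, a)) = v n (i, m n a)" if "i \<in> shom n 1" "a \<in> obj A n" for n i a
      using comm clsA[OF that] mapA unfolding uA_def by simp
    show "\<exists>d. is_map (prod_psh Ipsh B) X d \<and>
             (\<forall>n a. a \<in> obj (mcyl A B r m) n \<longrightarrow> d n (mcyl_map r m n a) = u n a) \<and>
             (\<forall>n b. b \<in> obj (prod_psh Ipsh B) n \<longrightarrow> p n (d n b) = v n b)"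
    proof -
      have rI: "\<And>n b. b \<in> obj B n \<Longrightarrow> r n b \<in> shom n (Suc 0)" using rS by simp
      have vS: "\<And>n i b. i \<in> shom n 1 \<Longrightarrow> b \<in> obj B n \<Longrightarrow> v n (i, b) \<in> obj Y n"
        using is_mapD1[OF vm] by simp
      have vN: "v l (compose (cube l) i f, act B l n f b) = act Y l n f (v n (i, b))"
        if vn: "f \<in> shom l n" "i \<in> shom n 1" "b \<in> obj B n" for l n f i b
        using is_mapD2[OF vm vn(1), of "(i, b)"] vn by simp
      have uAS: "\<And>n i a. i \<in> shom n 1 \<Longrightarrow> a \<in> obj A n \<Longrightarrow> uA n (i, a) \<in> obj X n"
        using is_mapD1[OF uAm] by simp
      have uAN: "uA l (compose (cube l) i f, act A l n f a) = act X l n f (uA n (i, a))"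
        if an: "f \<in> shom l n" "i \<in> shom n 1" "a \<in> obj A n" for l n f i a
        using is_mapD2[OF uAm an(1), of "(i, a)"] an by simp
      define S1 where "S1 n = m n ` obj A n" for n
      define \<beta>1 where "\<beta>1 n tb = uA n (ijoin n (r n (snd tb)) (fst tb), minv n (snd tb))" for n tb
      define v1 where "v1 n tb = v n (ijoin n (r n (snd tb)) (fst tb), snd tb)" for n tb
      have pr1: "lprob False B S1 uB \<beta>1 v1 X Y p"
        unfolding lprob_def
      proof (intro conjI)
        show "is_psh B" by (rule psB)
        show "subclosed B S1" unfolding subclosed_def S1_def
          using mS mN Acl by (auto simp: image_iff) (metis mN Acl)
        show "is_map B X uB" by (rule uBm)
        show "is_map (prod_psh Ipsh (subpsh B S1)) X \<beta>1"
        proof (unfold is_map_def, intro conjI allI impI)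
          fix n tb assume "tb \<in> obj (prod_psh Ipsh (subpsh B S1)) n"
          then obtain t a where tb: "tb = (t, m n a)" "t \<in> shom n 1" "a \<in> obj A n" unfolding S1_def by auto
          show "\<beta>1 n tb \<in> obj X n" unfolding \<beta>1_def tb(1) using uAS[OF ijoin_shom[OF rS[OF mS[OF tb(3)]] tb(2)] tb(3)] tb(3) by simp
        next
          fix l n f tb assume f: "f \<in> shom l n" and "tb \<in> obj (prod_psh Ipsh (subpsh B S1)) n"
          then obtain t a where tb: "tb = (t, m n a)" "t \<in> shom n 1" "a \<in> obj A n" unfolding S1_def by auto
          have e1: "act B l n f (m n a) = m l (act A l n f a)" using mN[OF f tb(3)] by simp
          have e2: "r l (m l (act A l n f a)) = compose (cube l) (r n (m n a)) f"
            using rN[OF f mS[OF tb(3)]] e1 by simp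
          have "uA l (compose (cube l) (ijoin n (r n (m n a)) t) f, act A l n f a)
              = act X l n f (uA n (ijoin n (r n (m n a)) t, a))"
            by (rule uAN[OF f ijoin_shom[OF rS[OF mS[OF tb(3)]] tb(2)] tb(3)])
          then show "\<beta>1 l (act (prod_psh Ipsh (subpsh B S1)) l n f tb) = act X l n f (\<beta>1 n tb)"
            unfolding \<beta>1_def tb(1) using e1 e2 Acl[OF f tb(3)] tb(3) by (simp add: ijoin_compose[OF f])
        qed
        show "\<forall>n s. s \<in> S1 n \<longrightarrow> \<beta>1 n (delta False n (), s) = uB n s"
          unfolding S1_def \<beta>1_def using uBA rS mS by auto
        show "is_map (prod_psh Ipsh B) Y v1"
        proof (unfold is_map_def, intro conjI allI impI)
          fix n tb assume "tb \<in> obj (prod_psh Ipsh B) n"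
          then show "v1 n tb \<in> obj Y n" unfolding v1_def using vS rS by auto
        next
          fix l n f tb assume f: "f \<in> shom l n" and "tb \<in> obj (prod_psh Ipsh B) n"
          then obtain t b where tb: "tb = (t, b)" "t \<in> shom n 1" "b \<in> obj B n" by auto
          have "v l (compose (cube l) (ijoin n (r n b) t) f, act B l n f b) = act Y l n f (v n (ijoin n (r n b) t, b))"
            by (rule vN[OF f ijoin_shom[OF rS[OF tb(3)] tb(2)] tb(3)])
          then show "v1 l (act (prod_psh Ipsh B) l n f tb) = act Y l n f (v1 n tb)"
            unfolding v1_def tb(1) using rN[OF f tb(3)] by (simp add: ijoin_compose[OF f])
        qed
        show "\<forall>n b. b \<in> obj B n \<longrightarrow> p n (uB n b) = v1 n (delta False n (), b)"
          unfolding v1_def using pB rS by auto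
        show "\<forall>n i s. i \<in> shom n 1 \<longrightarrow> s \<in> S1 n \<longrightarrow> p n (\<beta>1 n (i, s)) = v1 n (i, s)"
          unfolding S1_def \<beta>1_def v1_def using pA rS mS by auto
      qed
      obtain g where g: "lsol False B S1 uB \<beta>1 v1 X Y p (obj B) g"
        using lift_sub[OF inf fib pr1] by blast
      have gm: "is_map (prod_psh Ipsh B) X g"
        and g0: "\<And>n b. b \<in> obj B n \<Longrightarrow> g n (delta False n (), b) = uB n b"
        and gA: "\<And>n i a. i \<in> shom n 1 \<Longrightarrow> a \<in> obj A n \<Longrightarrow> g n (i, m n a) = uA n (ijoin n (r n (m n a)) i, a)"
        and gp: "\<And>n i b. i \<in> shom n 1 \<Longrightarrow> b \<in> obj B n \<Longrightarrow> p n (g n (i, b)) = v n (ijoin n (r n b) i, b)"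
        using g unfolding lsol_def S1_def \<beta>1_def v1_def by auto
      have gS: "\<And>n i b. i \<in> shom n 1 \<Longrightarrow> b \<in> obj B n \<Longrightarrow> g n (i, b) \<in> obj X n"
        using is_mapD1[OF gm] by simp
      have gN: "g l (compose (cube l) i f, act B l n f b) = act X l n f (g n (i, b))"
        if gn: "f \<in> shom l n" "i \<in> shom n 1" "b \<in> obj B n" for l n f i b
        using is_mapD2[OF gm gn(1), of "(i, b)"] gn by simp
      define B2 where "B2 = prod_psh Ipsh B"
      define S2 where "S2 n = {sb. sb \<in> shom n 1 \<times> obj B n \<and> (fst sb = r n (snd sb) \<or> snd sb \<in> m n ` obj A n)}" for n
      define \<alpha>2 where "\<alpha>2 n (sb :: (bool list \<Rightarrow> bool list) \<times> 'b) = g n (delta True n (), snd sb)" for n sb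
      define \<beta>2 where "\<beta>2 n tsb = (if fst (snd tsb) = r n (snd (snd tsb)) then g n (fst tsb, snd (snd tsb))
          else uA n (ijoin n (fst (snd tsb)) (fst tsb), minv n (snd (snd tsb))))" for n tsb
      define v2 where "v2 n tsb = v n (ijoin n (fst (snd tsb)) (fst tsb), snd (snd tsb))" for n tsb
      have b2A: "\<beta>2 n (t, (s, m n a)) = uA n (ijoin n s t, a)" if "t \<in> shom n 1" "s \<in> shom n 1" "a \<in> obj A n" for n t s a
        using that gA by (auto simp: \<beta>2_def)
      have b2B: "\<beta>2 n (t, (r n b, b)) = g n (t, b)" for n t b
        by (simp add: \<beta>2_def)
      have pr2: "lprob True B2 S2 \<alpha>2 \<beta>2 v2 X Y p"
        unfolding lprob_def
      proof (intro conjI)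
        show "is_psh B2" unfolding B2_def by (rule is_psh_prod[OF is_psh_Ipsh psB])
        show "subclosed B2 S2" unfolding subclosed_def
        proof (intro conjI allI impI)
          show "S2 n \<subseteq> obj B2 n" for n unfolding S2_def B2_def by auto
        next
          fix l n f sb assume f: "f \<in> shom l n" and sb: "sb \<in> S2 n"
          then obtain s b where sb': "sb = (s, b)" "s \<in> shom n 1" "b \<in> obj B n" "s = r n b \<or> b \<in> m n ` obj A n"
            unfolding S2_def by auto
          have c1: "compose (cube l) s f \<in> shom l 1" using shom_compose[OF f sb'(2)] .
          have c2: "act B l n f b \<in> obj B l" using Bcl[OF f sb'(3)] .
          have c3: "compose (cube l) s f = r l (act B l n f b) \<or> act B l n f b \<in> m l ` obj A l"
          proof (cases "s = r n b")
            case True then show ?thesis using rN[OF f sb'(3)] by simp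
          next
            case False
            then obtain a where a: "a \<in> obj A n" "b = m n a" using sb'(4) by blast
            have "act B l n f b = m l (act A l n f a)" using mN[OF f a(1)] a(2) by simp
            then have "act B l n f b \<in> m l ` obj A l" using Acl[OF f a(1)] by blast
            then show ?thesis by blast
          qed
          show "act B2 l n f sb \<in> S2 l" unfolding B2_def S2_def sb'(1) using c1 c2 c3 by simp
        qed
        show "is_map B2 X \<alpha>2"
        proof (unfold is_map_def, intro conjI allI impI)
          fix n sb assume "sb \<in> obj B2 n"
          then show "\<alpha>2 n sb \<in> obj X n" unfolding B2_def \<alpha>2_def using gS by auto
        next
          fix l n f sb assume f: "f \<in> shom l n" and "sb \<in> obj B2 n"
          then obtain s b where sb': "sb = (s, b)" "s \<in> shom n 1" "b \<in> obj B n" unfolding B2_def by auto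
          show "\<alpha>2 l (act B2 l n f sb) = act X l n f (\<alpha>2 n sb)"
            unfolding B2_def \<alpha>2_def sb'(1) using gN[OF f delta_shom sb'(3)] f by simp
        qed
        show "is_map (prod_psh Ipsh (subpsh B2 S2)) X \<beta>2"
        proof (unfold is_map_def, intro conjI allI impI)
          fix n tsb assume "tsb \<in> obj (prod_psh Ipsh (subpsh B2 S2)) n"
          then obtain t s b where tsb: "tsb = (t, (s, b))" "t \<in> shom n 1" "s \<in> shom n 1" "b \<in> obj B n"
              "s = r n b \<or> b \<in> m n ` obj A n"
            unfolding S2_def by auto
          show "\<beta>2 n tsb \<in> obj X n"
          proof (cases "s = r n b")
            case True then show ?thesis using tsb gS b2B by simp
          next
            case False
            then obtain a where a: "a \<in> obj A n" "b = m n a" using tsb(5) by blast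
            then show ?thesis using tsb b2A uAS[OF ijoin_shom[OF tsb(3) tsb(2)] a(1)] by simp
          qed
        next
          fix l n f tsb assume f: "f \<in> shom l n" and "tsb \<in> obj (prod_psh Ipsh (subpsh B2 S2)) n"
          then obtain t s b where tsb: "tsb = (t, (s, b))" "t \<in> shom n 1" "s \<in> shom n 1" "b \<in> obj B n"
              "s = r n b \<or> b \<in> m n ` obj A n"
            unfolding S2_def by auto
          have ct: "compose (cube l) t f \<in> shom l 1" using shom_compose[OF f tsb(2)] .
          have cs: "compose (cube l) s f \<in> shom l 1" using shom_compose[OF f tsb(3)] .
          have lhs: "act (prod_psh Ipsh (subpsh B2 S2)) l n f tsb = (compose (cube l) t f, (compose (cube l) s f, act B l n f b))"
            unfolding B2_def tsb(1) by simp
          show "\<beta>2 l (act (prod_psh Ipsh (subpsh B2 S2)) l n f tsb) = act X l n f (\<beta>2 n tsb)"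
            unfolding lhs
          proof (cases "b \<in> m n ` obj A n")
            case True
            then obtain a where a: "a \<in> obj A n" "b = m n a" by blast
            have e1: "act B l n f (m n a) = m l (act A l n f a)" using mN[OF f a(1)] by simp
            show "\<beta>2 l (compose (cube l) t f, compose (cube l) s f, act B l n f b) = act X l n f (\<beta>2 n tsb)"
              unfolding tsb(1) a(2) e1 b2A[OF ct cs Acl[OF f a(1)]] b2A[OF tsb(2) tsb(3) a(1)]
              using uAN[OF f ijoin_shom[OF tsb(3) tsb(2)] a(1)] by (simp add: ijoin_compose[OF f])
          next
            case False
            then have sr: "s = r n b" using tsb(5) by blast
            have e2: "compose (cube l) (r n b) f = r l (act B l n f b)" using rN[OF f tsb(4)] by simp
            show "\<beta>2 l (compose (cube l) t f, compose (cube l) s f, act B l n f b) = act X l n f (\<beta>2 n tsb)"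
              unfolding tsb(1) sr e2 b2B using gN[OF f tsb(2) tsb(4)] .
          qed
        qed
        show "\<forall>n s. s \<in> S2 n \<longrightarrow> \<beta>2 n (delta True n (), s) = \<alpha>2 n s"
        proof (intro allI impI)
          fix n sb assume "sb \<in> S2 n"
          then obtain s b where sb': "sb = (s, b)" "s \<in> shom n 1" "b \<in> obj B n" "s = r n b \<or> b \<in> m n ` obj A n"
            unfolding S2_def by auto
          show "\<beta>2 n (delta True n (), sb) = \<alpha>2 n sb"
          proof (cases "s = r n b")
            case True then show ?thesis unfolding sb'(1) \<alpha>2_def by (simp add: b2B)
          next
            case False
            then obtain a where a: "a \<in> obj A n" "b = m n a" using sb'(4) by blast
            show ?thesis unfolding sb'(1) \<alpha>2_def a(2) b2A[OF delta_shom sb'(2) a(1)]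
              using gA[OF delta_shom a(1)] rS[OF mS[OF a(1)]] sb'(2) by simp
          qed
        qed
        show "is_map (prod_psh Ipsh B2) Y v2"
        proof (unfold is_map_def, intro conjI allI impI)
          fix n tsb assume "tsb \<in> obj (prod_psh Ipsh B2) n"
          then show "v2 n tsb \<in> obj Y n" unfolding v2_def B2_def using vS by auto
        next
          fix l n f tsb assume f: "f \<in> shom l n" and "tsb \<in> obj (prod_psh Ipsh B2) n"
          then obtain t s b where tsb: "tsb = (t, (s, b))" "t \<in> shom n 1" "s \<in> shom n 1" "b \<in> obj B n"
            unfolding B2_def by auto
          show "v2 l (act (prod_psh Ipsh B2) l n f tsb) = act Y l n f (v2 n tsb)"
            unfolding v2_def B2_def tsb(1) using vN[OF f ijoin_shom[OF tsb(3) tsb(2)] tsb(4)]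
            by (simp add: ijoin_compose[OF f])
        qed
        show "\<forall>n b. b \<in> obj B2 n \<longrightarrow> p n (\<alpha>2 n b) = v2 n (delta True n (), b)"
        proof (intro allI impI)
          fix n sb assume "sb \<in> obj B2 n"
          then obtain s b where sb': "sb = (s, b)" "s \<in> shom n 1" "b \<in> obj B n" unfolding B2_def by auto
          show "p n (\<alpha>2 n sb) = v2 n (delta True n (), sb)"
            unfolding \<alpha>2_def v2_def sb'(1) using gp[OF delta_shom sb'(3)] rS[OF sb'(3)] sb'(2) by simp
        qed
        show "\<forall>n i s. i \<in> shom n 1 \<longrightarrow> s \<in> S2 n \<longrightarrow> p n (\<beta>2 n (i, s)) = v2 n (i, s)"
        proof (intro allI impI)
          fix n t sb assume t: "t \<in> shom n 1" and "sb \<in> S2 n"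
          then obtain s b where sb': "sb = (s, b)" "s \<in> shom n 1" "b \<in> obj B n" "s = r n b \<or> b \<in> m n ` obj A n"
            unfolding S2_def by auto
          show "p n (\<beta>2 n (t, sb)) = v2 n (t, sb)"
          proof (cases "s = r n b")
            case True then show ?thesis unfolding sb'(1) v2_def using b2B gp[OF t sb'(3)] by simp
          next
            case False
            then obtain a where a: "a \<in> obj A n" "b = m n a" using sb'(4) by blast
            show ?thesis unfolding sb'(1) v2_def a(2) b2A[OF t sb'(2) a(1)]
              using pA[OF ijoin_shom[OF sb'(2) t] a(1)] by simp
          qed
        qed
      qed
      obtain d2 where d2: "lsol True B2 S2 \<alpha>2 \<beta>2 v2 X Y p (obj B2) d2"
        using lift_sub[OF inf fib pr2] by blast
      have d2m: "is_map (prod_psh Ipsh B2) X d2"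
        and d2b: "\<And>n i sb. i \<in> shom n 1 \<Longrightarrow> sb \<in> S2 n \<Longrightarrow> d2 n (i, sb) = \<beta>2 n (i, sb)"
        and d2p: "\<And>n i sb. i \<in> shom n 1 \<Longrightarrow> sb \<in> obj B2 n \<Longrightarrow> p n (d2 n (i, sb)) = v2 n (i, sb)"
        using d2 unfolding lsol_def by auto
      define d where "d n sb = d2 n (delta False n (), sb)" for n sb
      have "is_map (prod_psh Ipsh B) X d"
      proof (unfold is_map_def, intro conjI allI impI)
        fix n sb assume "sb \<in> obj (prod_psh Ipsh B) n"
        then show "d n sb \<in> obj X n" unfolding d_def using is_mapD1[OF d2m, of "(delta False n (), sb)" n]
          by (simp add: B2_def)
      next
        fix l n f sb assume f: "f \<in> shom l n" and sb: "sb \<in> obj (prod_psh Ipsh B) n"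
        have "(delta False n (), sb) \<in> obj (prod_psh Ipsh B2) n" using sb by (simp add: B2_def)
        from is_mapD2[OF d2m f this]
        show "d l (act (prod_psh Ipsh B) l n f sb) = act X l n f (d n sb)"
          unfolding d_def using f by (simp add: B2_def)
      qed
      moreover have "\<forall>n a. a \<in> obj (mcyl A B r m) n \<longrightarrow> d n (mcyl_map r m n a) = u n a"
      proof (intro allI impI)
        fix n S assume "S \<in> obj (mcyl A B r m) n"
        then obtain x where x: "x \<in> obj B n <+> obj (prod_psh Ipsh A) n" "S = ?r n `` {x}"
          unfolding mcyl_eq by (rule po_obj_cases)
        show "d n (mcyl_map r m n S) = u n S"
        proof (cases x)
          case (Inl b)
          then have b: "b \<in> obj B n" using x(1) by auto
          have "(r n b, b) \<in> S2 n" unfolding S2_def using rS[OF b] b by simp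
          then show ?thesis unfolding x(2) Inl mapB d_def
            using d2b[OF delta_shom] b2B g0[OF b] by (simp add: uB_def)
        next
          case (Inr ia)
          then obtain i a where ia: "x = Inr (i, a)" "i \<in> shom n 1" "a \<in> obj A n" using x(1) by auto
          have "(i, m n a) \<in> S2 n" unfolding S2_def using ia mS by auto
          then show ?thesis unfolding x(2) ia(1) mapA d_def
            using d2b[OF delta_shom] b2A[OF delta_shom ia(2) ia(3)] ia(2) by (simp add: uA_def)
        qed
      qed
      moreover have "\<forall>n b. b \<in> obj (prod_psh Ipsh B) n \<longrightarrow> p n (d n b) = v n b"
      proof (intro allI impI)
        fix n sb assume "sb \<in> obj (prod_psh Ipsh B) n"
        then obtain s b where sb': "sb = (s, b)" "s \<in> shom n 1" "b \<in> obj B n" by auto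
        show "p n (d n sb) = v n sb"
          unfolding d_def using d2p[OF delta_shom, of sb n] sb' by (simp add: B2_def v2_def)
      qed
      ultimately show ?thesis by blast
    qed
  qed
qed

end
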